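(* Let $x_0,\ldots,x_k$ be points of the unit sphere $\mathcal S_n\subset\mathbb R^{n+1}$ ($n\ge1$) with its canonical metric, and $X=[x_0,\ldots,x_k]$ the $(n+1)\times(k+1)$ matrix of their coordinates. Then $x_0,\ldots,x_k$ are affinely independent if and only if $\mathrm{rank}(X)=k+1$.
   Context: On $\mathcal S_n$ with the metric induced by $\mathbb R^{n+1}$, the cut locus of $x$ is $\{-x\}$ and $\log_x(y)=\frac{\theta}{\sin\theta}(y-\cos\theta\,x)$ with $\theta=\arccos(x^\top y)$. Points $x_0,\ldots,x_k$ of a Riemannian manifold are affinely independent if no $x_j$ ($j\neq i$) lies in the cut locus of $x_i$ and, for every $i$, the $k$ vectors $\{\log_{x_i}(x_j)\}_{j\ne i}$ are linearly independent in $T_{x_i}\mathcal S_n$. *)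

theory Defs
  imports "HOL-Analysis.Analysis"
begin

text \<open>The unit sphere S_n in R^(n+1); the ambient space R^(n+1) is real^'n with CARD('n) = n+1.\<close>
definition unit_sphere :: "(real^'n) set" where
  "unit_sphere = sphere 0 1"

definition sphere_cut_locus :: "real^'n \<Rightarrow> (real^'n) set" where
  "sphere_cut_locus x = {-x}"

definition sphere_log :: "real^'n \<Rightarrow> real^'n \<Rightarrow> real^'n" where
  "sphere_log x y = (let \<theta> = arccos (x \<bullet> y) in (\<theta> / sin \<theta>) *\<^sub>R (y - cos \<theta> *\<^sub>R x))"

text \<open>Linear independence of a family v indexed by J (as a family, counting repetitions).\<close>
definition lin_indep_family :: "'i set \<Rightarrow> ('i \<Rightarrow> real^'n) \<Rightarrow> bool" where
  "lin_indep_family J v \<longleftrightarrow>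
     (\<forall>c. (\<Sum>j\<in>J. c j *\<^sub>R v j) = 0 \<longrightarrow> (\<forall>j\<in>J. c j = 0))"

text \<open>Affine independence of points x_i (i ranging over the finite index type 'k,
  which plays the role of {0,...,k}) on the sphere.\<close>
definition sphere_aff_indep :: "('k::finite \<Rightarrow> real^'n) \<Rightarrow> bool" where
  "sphere_aff_indep x \<longleftrightarrow>
     (\<forall>i j. j \<noteq> i \<longrightarrow> x j \<notin> sphere_cut_locus (x i)) \<and>
     (\<forall>i. lin_indep_family (UNIV - {i}) (\<lambda>j. sphere_log (x i) (x j)))"

text \<open>Coordinate matrix X = [x_0, ..., x_k]: rows indexed by 'n, columns by 'k.\<close>
definition coord_matrix :: "('k::finite \<Rightarrow> real^'n) \<Rightarrow> real^'k^'n" where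
  "coord_matrix x = (\<chi> r c. x c $ r)"

end

theory Submission
  imports Defs
begin

lemma cm_mult: "coord_matrix x *v c = (\<Sum>j\<in>UNIV. c$j *\<^sub>R x j)"
  by (simp add: vec_eq_iff matrix_vector_mult_def coord_matrix_def sum_component mult.commute)

lemma rank_iff: "rank (coord_matrix x) = CARD('k) \<longleftrightarrow> lin_indep_family UNIV (x::'k::finite \<Rightarrow> real^'n)"
proof -
  have "rank (coord_matrix x) = CARD('k) \<longleftrightarrow> \<not>(\<exists>c. c \<noteq> 0 \<and> coord_matrix x *v c = 0)"
    using matrix_nonfull_linear_equations_eq[of "coord_matrix x"] by blast
  also have "\<dots> \<longleftrightarrow> lin_indep_family UNIV x"
  proof
    assume H: "\<not>(\<exists>c. c \<noteq> 0 \<and> coord_matrix x *v c = 0)"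
    show "lin_indep_family UNIV x" unfolding lin_indep_family_def
    proof (intro allI impI)
      fix c assume "(\<Sum>j\<in>UNIV. c j *\<^sub>R x j) = 0"
      hence "coord_matrix x *v (\<chi> j. c j) = 0" by (simp add: cm_mult)
      with H have "(\<chi> j. c j) = 0" by blast
      thus "\<forall>j\<in>UNIV. c j = 0" by (simp add: vec_eq_iff)
    qed
  next
    assume L: "lin_indep_family UNIV x"
    show "\<not>(\<exists>c. c \<noteq> 0 \<and> coord_matrix x *v c = 0)"
    proof
      assume "\<exists>c. c \<noteq> 0 \<and> coord_matrix x *v c = 0"
      then obtain c where "c \<noteq> 0" "(\<Sum>j\<in>UNIV. c$j *\<^sub>R x j) = 0" by (auto simp: cm_mult)
      with L show False unfolding lin_indep_family_def by (auto simp: vec_eq_iff)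
    qed
  qed
  finally show ?thesis .
qed

lemma proj_iff:
  fixes x :: "'k::finite \<Rightarrow> real^'n"
  assumes u: "x i \<bullet> x i = 1"
  shows "lin_indep_family UNIV x \<longleftrightarrow>
     lin_indep_family (UNIV - {i}) (\<lambda>j. x j - (x i \<bullet> x j) *\<^sub>R x i)"
proof
  assume L: "lin_indep_family UNIV x"
  show "lin_indep_family (UNIV - {i}) (\<lambda>j. x j - (x i \<bullet> x j) *\<^sub>R x i)"
    unfolding lin_indep_family_def
  proof (intro allI impI)
    fix c assume S: "(\<Sum>j\<in>UNIV - {i}. c j *\<^sub>R (x j - (x i \<bullet> x j) *\<^sub>R x i)) = 0"
    define d where "d = c(i := - (\<Sum>j\<in>UNIV - {i}. c j * (x i \<bullet> x j)))"
    have "(\<Sum>j\<in>UNIV - {i}. c j *\<^sub>R (x j - (x i \<bullet> x j) *\<^sub>R x i))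
       = (\<Sum>j\<in>UNIV - {i}. c j *\<^sub>R x j) - (\<Sum>j\<in>UNIV - {i}. c j * (x i \<bullet> x j)) *\<^sub>R x i"
      by (simp add: scaleR_diff_right sum_subtractf scaleR_left.sum)
    moreover have "(\<Sum>j\<in>UNIV. d j *\<^sub>R x j) = d i *\<^sub>R x i + (\<Sum>j\<in>UNIV - {i}. d j *\<^sub>R x j)"
      by (simp add: sum.remove)
    moreover have "(\<Sum>j\<in>UNIV - {i}. d j *\<^sub>R x j) = (\<Sum>j\<in>UNIV - {i}. c j *\<^sub>R x j)"
      by (rule sum.cong) (auto simp: d_def)
    ultimately have "(\<Sum>j\<in>UNIV. d j *\<^sub>R x j) = 0" using S by (simp add: d_def)
    with L have "\<forall>j. d j = 0" unfolding lin_indep_family_def by blast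
    thus "\<forall>j\<in>UNIV - {i}. c j = 0" by (auto simp: d_def split: if_splits)
  qed
next
  assume L: "lin_indep_family (UNIV - {i}) (\<lambda>j. x j - (x i \<bullet> x j) *\<^sub>R x i)"
  show "lin_indep_family UNIV x" unfolding lin_indep_family_def
  proof (intro allI impI)
    fix c assume S: "(\<Sum>j\<in>UNIV. c j *\<^sub>R x j) = 0"
    define P where "P v = v - (x i \<bullet> v) *\<^sub>R x i" for v
    have lin: "linear P" unfolding P_def linear_iff
      by (simp add: inner_add_right algebra_simps)
    hence "P (\<Sum>j\<in>UNIV. c j *\<^sub>R x j) = (\<Sum>j\<in>UNIV. c j *\<^sub>R P (x j))"
      by (simp add: linear_sum linear_scale)
    also have "\<dots> = c i *\<^sub>R P (x i) + (\<Sum>j\<in>UNIV - {i}. c j *\<^sub>R P (x j))"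
      by (simp add: sum.remove)
    also have "P (x i) = 0" using u by (simp add: P_def)
    finally have "(\<Sum>j\<in>UNIV - {i}. c j *\<^sub>R P (x j)) = 0"
      using S lin by (simp add: linear_0)
    with L have cj: "\<forall>j\<in>UNIV - {i}. c j = 0" unfolding lin_indep_family_def P_def by blast
    have "(\<Sum>j\<in>UNIV. c j *\<^sub>R x j) = c i *\<^sub>R x i + (\<Sum>j\<in>UNIV - {i}. c j *\<^sub>R x j)"
      by (simp add: sum.remove)
    also have "(\<Sum>j\<in>UNIV - {i}. c j *\<^sub>R x j) = 0" using cj by simp
    finally have "c i *\<^sub>R x i = 0" using S by simp
    moreover have "x i \<noteq> 0" using u by auto
    ultimately have "c i = 0" by simp
    with cj show "\<forall>j\<in>UNIV. c j = 0" by blast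
  qed
qed

lemma scale_iff:
  assumes "\<forall>j\<in>J. s j \<noteq> 0"
  shows "lin_indep_family J (\<lambda>j. s j *\<^sub>R v j) \<longleftrightarrow> lin_indep_family J v"
proof
  assume L: "lin_indep_family J (\<lambda>j. s j *\<^sub>R v j)"
  show "lin_indep_family J v" unfolding lin_indep_family_def
  proof (intro allI impI)
    fix c assume "(\<Sum>j\<in>J. c j *\<^sub>R v j) = 0"
    moreover have "(\<Sum>j\<in>J. (c j / s j) *\<^sub>R (s j *\<^sub>R v j)) = (\<Sum>j\<in>J. c j *\<^sub>R v j)"
      by (rule sum.cong) (use assms in auto)
    ultimately have "\<forall>j\<in>J. c j / s j = 0" using L unfolding lin_indep_family_def by metis
    thus "\<forall>j\<in>J. c j = 0" using assms by auto
  qed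
next
  assume L: "lin_indep_family J v"
  show "lin_indep_family J (\<lambda>j. s j *\<^sub>R v j)" unfolding lin_indep_family_def
  proof (intro allI impI)
    fix c assume "(\<Sum>j\<in>J. c j *\<^sub>R (s j *\<^sub>R v j)) = 0"
    hence "(\<Sum>j\<in>J. (c j * s j) *\<^sub>R v j) = 0" by simp
    hence "\<forall>j\<in>J. c j * s j = 0" using L unfolding lin_indep_family_def by metis
    thus "\<forall>j\<in>J. c j = 0" using assms by auto
  qed
qed

lemma scale_zero:
  assumes "lin_indep_family J (\<lambda>j. s j *\<^sub>R v j)" "j \<in> J"
  shows "s j \<noteq> 0"
proof
  assume z: "s j = 0"
  define c where "c k = (if k = j then 1 else (0::real))" for k
  have "\<forall>k\<in>J. c k *\<^sub>R (s k *\<^sub>R v k) = 0" by (simp add: c_def z)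
  hence "(\<Sum>k\<in>J. c k *\<^sub>R (s k *\<^sub>R v k)) = 0" by (rule sum.neutral)
  hence "c j = 0" using assms unfolding lin_indep_family_def by blast
  thus False by (simp add: c_def)
qed

lemma indep_D: "lin_indep_family J v \<Longrightarrow> (\<Sum>j\<in>J. c j *\<^sub>R v j) = 0 \<Longrightarrow> j \<in> J \<Longrightarrow> c j = 0"
  unfolding lin_indep_family_def by blast

lemma sq_diff: "((a::real^'n) - b) \<bullet> (a - b) = a \<bullet> a - 2 * (b \<bullet> a) + b \<bullet> b"
  by (simp add: inner_diff_left inner_diff_right inner_commute[of a b])

lemma sq_add: "((a::real^'n) + b) \<bullet> (a + b) = a \<bullet> a + 2 * (b \<bullet> a) + b \<bullet> b"
  by (simp add: inner_add_left inner_add_right inner_commute[of a b])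

lemma log_eq:
  fixes a b :: "real^'n"
  assumes "norm a = 1" "norm b = 1"
  shows "sphere_log a b = (arccos (a \<bullet> b) / sin (arccos (a \<bullet> b))) *\<^sub>R (b - (a \<bullet> b) *\<^sub>R a)"
proof -
  have "\<bar>a \<bullet> b\<bar> \<le> 1" using Cauchy_Schwarz_ineq2[of a b] assms by simp
  hence "cos (arccos (a \<bullet> b)) = a \<bullet> b" by (simp add: cos_arccos_abs)
  thus ?thesis by (simp add: sphere_log_def Let_def)
qed

theorem mainTheorem4:
  fixes x :: "'k::finite \<Rightarrow> real^'n"
  assumes "CARD('n) \<ge> 2"
    and "\<forall>i. x i \<in> unit_sphere"
  shows "sphere_aff_indep x \<longleftrightarrow> rank (coord_matrix x) = CARD('k)"
proof -
  have nx: "\<And>i. norm (x i) = 1" using assms(2) by (simp add: unit_sphere_def)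
  have ux: "\<And>i. x i \<bullet> x i = 1" using nx by (simp add: power2_norm_eq_inner[symmetric])
  define s where "s i j = arccos (x i \<bullet> x j) / sin (arccos (x i \<bullet> x j))" for i j
  have logs: "(\<lambda>j. sphere_log (x i) (x j)) = (\<lambda>j. s i j *\<^sub>R (x j - (x i \<bullet> x j) *\<^sub>R x i))" for i
    by (rule ext) (simp only: s_def log_eq[OF nx nx])
  show ?thesis
  proof
    assume A: "sphere_aff_indep x"
    obtain i :: 'k where True by blast
    have L: "lin_indep_family (UNIV - {i}) (\<lambda>j. s i j *\<^sub>R (x j - (x i \<bullet> x j) *\<^sub>R x i))"
    proof -
      have "lin_indep_family (UNIV - {i}) (\<lambda>j. sphere_log (x i) (x j))"
        using A unfolding sphere_aff_indep_def by (elim conjE allE)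
      thus ?thesis by (simp only: logs)
    qed
    have nz: "\<forall>j\<in>UNIV - {i}. s i j \<noteq> 0" using scale_zero[OF L] by (intro ballI)
    have "lin_indep_family (UNIV - {i}) (\<lambda>j. x j - (x i \<bullet> x j) *\<^sub>R x i)"
      using scale_iff[OF nz] L by (rule iffD1)
    hence "lin_indep_family UNIV x" by (rule iffD2[OF proj_iff[OF ux]])
    thus "rank (coord_matrix x) = CARD('k)" by (rule iffD2[OF rank_iff])
  next
    assume R: "rank (coord_matrix x) = CARD('k)"
    hence L: "lin_indep_family UNIV x" by (rule iffD1[OF rank_iff])
    have ne: "x j \<noteq> x i \<and> x j \<noteq> - x i" if "j \<noteq> i" for i j
    proof
      show "x j \<noteq> x i"
      proof
        assume e: "x j = x i"
        let ?c = "\<lambda>k. if k = i then 1 else if k = j then -1 else (0::real)"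
        have pw: "?c k *\<^sub>R x k = (if k = i then x i else 0) + (if k = j then - x j else 0)" for k
          using that by auto
        have "(\<Sum>k\<in>UNIV. ?c k *\<^sub>R x k) = (\<Sum>k\<in>UNIV. (if k = i then x i else 0) + (if k = j then - x j else 0))"
          by (rule sum.cong[OF refl]) (rule pw)
        also have "\<dots> = x i + (- x j)" by (simp only: sum.distrib sum.delta finite UNIV_I if_True)
        finally have "(\<Sum>k\<in>UNIV. ?c k *\<^sub>R x k) = x i - x j" by simp
        hence "(\<Sum>k\<in>UNIV. ?c k *\<^sub>R x k) = 0" using e by simp
        hence "?c i = 0" using L by (intro indep_D[of UNIV x ?c]) auto
        thus False by simp
      qed
      show "x j \<noteq> - x i"
      proof
        assume e: "x j = - x i"
        let ?c = "\<lambda>k. if k = i then 1 else if k = j then 1 else (0::real)"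
        have pw: "?c k *\<^sub>R x k = (if k = i then x i else 0) + (if k = j then x j else 0)" for k
          using that by auto
        have "(\<Sum>k\<in>UNIV. ?c k *\<^sub>R x k) = (\<Sum>k\<in>UNIV. (if k = i then x i else 0) + (if k = j then x j else 0))"
          by (rule sum.cong[OF refl]) (rule pw)
        also have "\<dots> = x i + (x j)" by (simp only: sum.distrib sum.delta finite UNIV_I if_True)
        finally have "(\<Sum>k\<in>UNIV. ?c k *\<^sub>R x k) = x i + x j" by simp
        hence "(\<Sum>k\<in>UNIV. ?c k *\<^sub>R x k) = 0" using e by simp
        hence "?c i = 0" using L by (intro indep_D[of UNIV x ?c]) auto
        thus False by simp
      qed
    qed
    have spos: "s i j \<noteq> 0" if "j \<noteq> i" for i j
    proof -
      let ?t = "x i \<bullet> x j"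
      have le: "\<bar>?t\<bar> \<le> 1" using Cauchy_Schwarz_ineq2[of "x i" "x j"] nx by simp
      have "?t \<noteq> 1"
      proof
        assume "?t = 1"
        moreover have "(x j - x i) \<bullet> (x j - x i) = x j \<bullet> x j - 2 * (x i \<bullet> x j) + x i \<bullet> x i"
          by (rule sq_diff)
        ultimately have "(x j - x i) \<bullet> (x j - x i) = 0" using ux[of i] ux[of j] by simp
        hence "x j - x i = 0" by (simp only: inner_eq_zero_iff)
        thus False using ne[OF that] by simp
      qed
      moreover have "?t \<noteq> -1"
      proof
        assume "?t = -1"
        moreover have "(x j + x i) \<bullet> (x j + x i) = x j \<bullet> x j + 2 * (x i \<bullet> x j) + x i \<bullet> x i"
          by (rule sq_add)
        ultimately have "(x j + x i) \<bullet> (x j + x i) = 0" using ux[of i] ux[of j] by simp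
        hence "x j + x i = 0" by (simp only: inner_eq_zero_iff)
        hence "x j = - x i" by (simp add: eq_neg_iff_add_eq_0)
        thus False using ne[OF that] by simp
      qed
      ultimately have t: "-1 < ?t" "?t < 1" using le by auto
      have "0 < arccos ?t" "arccos ?t < pi" using arccos_lt_bounded[OF t] by auto
      hence "0 < sin (arccos ?t)" by (simp add: sin_gt_zero)
      thus ?thesis using \<open>0 < arccos ?t\<close> by (simp add: s_def)
    qed
    show "sphere_aff_indep x" unfolding sphere_aff_indep_def
    proof (intro conjI allI impI)
      fix i j :: 'k assume "j \<noteq> i"
      thus "x j \<notin> sphere_cut_locus (x i)" using ne by (simp add: sphere_cut_locus_def)
    next
      fix i
      have P: "lin_indep_family (UNIV - {i}) (\<lambda>j. x j - (x i \<bullet> x j) *\<^sub>R x i)"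
        using L by (rule iffD1[OF proj_iff[OF ux]])
      have nz: "\<forall>j\<in>UNIV - {i}. s i j \<noteq> 0" using spos by blast
      have "lin_indep_family (UNIV - {i}) (\<lambda>j. s i j *\<^sub>R (x j - (x i \<bullet> x j) *\<^sub>R x i))"
        using scale_iff[OF nz] P by (rule iffD2)
      thus "lin_indep_family (UNIV - {i}) (\<lambda>j. sphere_log (x i) (x j))" by (simp only: logs)
    qed
  qed
qed

end
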